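(* Let $\alpha\in\mathbb{R}$ and $\mathbb{Q}[x]^+_{x=\alpha}=\{p\in\mathbb{Q}[x]:p(\alpha)>0\}$. For real $\beta\neq\gamma$ let $S_{\beta,\gamma}=\{p\in\mathbb{Q}[x]: p(\beta)>p(\gamma)\}$; for $z\in\mathbb{C}\setminus\mathbb{R}$ let $S_{z,\bar z}=\{p\in\mathbb{Q}[x]:\operatorname{Im}p(z)>0\}$; for $\delta\in\mathbb{R}$ let $S^+_\delta=\{p\in\mathbb{Q}[x]:p'(\delta)>0\}$ and $S^-_\delta=\{p\in\mathbb{Q}[x]:p'(\delta)<0\}$. Then: (1) for all $\beta,\gamma\in\mathbb{R}\setminus\{\alpha\}$ with $\beta\ne\gamma$, the set $S_{\beta,\gamma}\cap\mathbb{Q}[x]^+_{x=\alpha}$ is not closed under multiplication; moreover, for every $\beta\neq\alpha$, the set $S_{\alpha,\beta}\cap\mathbb{Q}[x]^+_{x=\alpha}$ is not closed under multiplication; (2) for every $z\in\mathbb{C}\setminus\mathbb{R}$, the set $S_{z,\bar z}\cap\mathbb{Q}[x]^+_{x=\alpha}$ is not closed under multiplication; (3) for every real $\delta\neq\alpha$, neither $S^+_\delta\cap\mathbb{Q}[x]^+_{x=\alpha}$ nor $S^-_\delta\cap\mathbb{Q}[x]^+_{x=\alpha}$ is closed under multiplication. *)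

theory Defs
  imports "HOL-Computational_Algebra.Polynomial" Complex_Main
begin

definition reval :: "rat poly \<Rightarrow> real \<Rightarrow> real" where
  "reval p x = poly (map_poly of_rat p) x"

definition ceval :: "rat poly \<Rightarrow> complex \<Rightarrow> complex" where
  "ceval p z = poly (map_poly of_rat p) z"

definition pos_at :: "real \<Rightarrow> rat poly set" where
  "pos_at \<alpha> = {p. reval p \<alpha> > 0}"

definition S_real :: "real \<Rightarrow> real \<Rightarrow> rat poly set" where
  "S_real \<beta> \<gamma> = {p. reval p \<beta> > reval p \<gamma>}"

definition S_cplx :: "complex \<Rightarrow> rat poly set" where
  "S_cplx z = {p. Im (ceval p z) > 0}"

definition S_plus :: "real \<Rightarrow> rat poly set" where
  "S_plus \<delta> = {p. reval (pderiv p) \<delta> > 0}"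

definition S_minus :: "real \<Rightarrow> rat poly set" where
  "S_minus \<delta> = {p. reval (pderiv p) \<delta> < 0}"

definition mult_closed :: "rat poly set \<Rightarrow> bool" where
  "mult_closed S \<longleftrightarrow> (\<forall>p\<in>S. \<forall>q\<in>S. p * q \<in> S)"

end

theory Submission
  imports Defs
begin

lemma mp_mult: "map_poly (of_rat :: rat \<Rightarrow> 'a::field_char_0) (p * q) = map_poly of_rat p * map_poly of_rat q"
  by (intro poly_eqI) (simp add: coeff_mult coeff_map_poly of_rat_sum of_rat_mult)

lemma reval_mult: "reval (p*q) x = reval p x * reval q x"
  by (simp add: reval_def mp_mult)
lemma ceval_mult: "ceval (p*q) x = ceval p x * ceval q x"
  by (simp add: ceval_def mp_mult)

lemma of_real_of_rat_eq: "(of_real (of_rat q :: real) :: 'a::{real_field,field_char_0}) = of_rat q"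
  by (cases q) (simp add: of_rat_rat)

lemma poly_map_of_real: "poly (map_poly of_real P) (of_real x :: 'a::{real_algebra_1,comm_semiring_0}) = of_real (poly P x)"
  by (induction P) (simp_all add: map_poly_pCons)

lemma ceval_real: "ceval p (of_real x) = of_real (reval p x)"
proof -
  have "map_poly (of_rat :: rat \<Rightarrow> complex) p = map_poly of_real (map_poly of_rat p)"
    by (subst map_poly_map_poly) (auto simp: o_def of_real_of_rat_eq)
  then show ?thesis by (simp add: ceval_def reval_def poly_map_of_real)
qed

lemma approx:
  fixes P :: "real poly"
  shows "\<And>e R. e > 0 \<Longrightarrow> R \<ge> 0 \<Longrightarrow> \<exists>p::rat poly. \<forall>w::complex. norm w \<le> R \<longrightarrow>
     norm (ceval p w - poly (map_poly of_real P) w) < e"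
proof (induction P)
  case (pCons c P)
  obtain c' :: rat where c': "c - e/2 < of_rat c'" "of_rat c' < c + e/2"
    using of_rat_dense[of "c - e/2" "c + e/2"] pCons.prems by auto
  obtain p' where p': "\<And>w::complex. norm w \<le> R \<Longrightarrow>
     norm (ceval p' w - poly (map_poly of_real P) w) < e/(2*(R+1))"
    using pCons.IH[of "e/(2*(R+1))" R] pCons.prems by auto
  show ?case
  proof (intro exI allI impI)
    fix w :: complex assume w: "norm w \<le> R"
    have "ceval (pCons c' p') w - poly (map_poly of_real (pCons c P)) w
       = (of_real (of_rat c' - c)) + w * (ceval p' w - poly (map_poly of_real P) w)"
    proof -
      have e: "(of_rat c' :: complex) = of_real (of_rat c')" by (simp add: of_real_of_rat_eq)
      show ?thesis by (simp add: ceval_def map_poly_pCons e algebra_simps del: of_real_of_rat_eq)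
    qed
    also have "norm \<dots> \<le> \<bar>of_rat c' - c\<bar> + norm w * norm (ceval p' w - poly (map_poly of_real P) w)"
      by (metis norm_mult norm_of_real norm_triangle_ineq)
    also have "\<dots> < e/2 + R * (e/(2*(R+1))) + e/2 - e/2"
    proof -
      have "norm w * norm (ceval p' w - poly (map_poly of_real P) w) \<le> R * (e/(2*(R+1)))"
        using p'[OF w] w pCons.prems by (intro mult_mono) auto
      then show ?thesis using c' by linarith
    qed
    also have "\<dots> \<le> e"
    proof -
      have "R * (e/(2*(R+1))) \<le> e/2" using pCons.prems by (simp add: field_simps)
      then show ?thesis by linarith
    qed
    finally show "norm (ceval (pCons c' p') w - poly (map_poly of_real (pCons c P)) w) < e" .
  qed
qed (intro exI[of _ 0], simp add: ceval_def)

lemma approx_real: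
  fixes P :: "real poly" assumes "e > 0"
  shows "\<exists>p. \<bar>reval p a - poly P a\<bar> < e \<and> \<bar>reval p b - poly P b\<bar> < e \<and> \<bar>reval p c - poly P c\<bar> < e"
proof -
  obtain p where p: "\<And>w::complex. norm w \<le> \<bar>a\<bar> + \<bar>b\<bar> + \<bar>c\<bar> \<Longrightarrow>
     norm (ceval p w - poly (map_poly of_real P) w) < e"
    using approx[OF assms, of "\<bar>a\<bar> + \<bar>b\<bar> + \<bar>c\<bar>" P] by auto
  have *: "\<bar>reval p x - poly P x\<bar> < e" if "\<bar>x\<bar> \<le> \<bar>a\<bar> + \<bar>b\<bar> + \<bar>c\<bar>" for x
  proof -
    have "norm (ceval p (of_real x) - poly (map_poly of_real P) (of_real x)) < e"
      using p[of "of_real x"] that by simp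
    also have "ceval p (of_real x) - poly (map_poly of_real P) (of_real x) = of_real (reval p x - poly P x)"
      by (simp add: ceval_real poly_map_of_real)
    finally have "norm (of_real (reval p x - poly P x) :: complex) < e" .
    then show ?thesis by (simp only: norm_of_real)
  qed
  show ?thesis by (intro exI[of _ p] conjI *) auto
qed

lemma interp3:
  fixes a b c u v w :: real
  assumes "a \<noteq> b" "a \<noteq> c" "b \<noteq> c"
  shows "\<exists>P. poly P a = u \<and> poly P b = v \<and> poly P c = w"
proof -
  define P where "P = smult (u/((a-b)*(a-c))) ([:-b,1:]*[:-c,1:]) + smult (v/((b-a)*(b-c))) ([:-a,1:]*[:-c,1:])
     + smult (w/((c-a)*(c-b))) ([:-a,1:]*[:-b,1:])"
  have L: "\<And>x y::real. poly [:-y,1:] x = x - y" by simp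
  have e: "\<And>x. poly P x = u/((a-b)*(a-c)) * ((x-b)*(x-c)) + v/((b-a)*(b-c)) * ((x-a)*(x-c))
     + w/((c-a)*(c-b)) * ((x-a)*(x-b))"
    by (simp only: P_def poly_add poly_smult poly_mult L)
  have d: "(a-b)*(a-c) \<noteq> 0" "(b-a)*(b-c) \<noteq> 0" "(c-a)*(c-b) \<noteq> 0" using assms by auto
  have "poly P a = u" "poly P b = v" "poly P c = w"
    unfolding e using d by simp_all
  then show ?thesis by blast
qed

lemma interp2:
  fixes a b u v :: real
  assumes "a \<noteq> b"
  shows "\<exists>P. poly P a = u \<and> poly P b = v"
proof -
  define P where "P = smult (u/(a-b)) [:-b,1:] + smult (v/(b-a)) [:-a,1:]"
  have L: "\<And>x y::real. poly [:-y,1:] x = x - y" by simp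
  have e: "\<And>x. poly P x = u/(a-b) * (x-b) + v/(b-a) * (x-a)"
    by (simp only: P_def poly_add poly_smult L)
  have d: "a-b \<noteq> 0" "b-a \<noteq> 0" using assms by auto
  have "poly P a = u" "poly P b = v"
    unfolding e using d by simp_all
  then show ?thesis by blast
qed

lemma interpC:
  fixes z :: complex and x :: real
  assumes "Im z \<noteq> 0"
  shows "\<exists>P. poly P x = 1 \<and> poly (map_poly of_real P) z = Complex (-1) 1"
proof -
  define a where "a = Re z"
  define b where "b = Im z"
  have z: "z = Complex a b" by (simp add: a_def b_def)
  have b: "b \<noteq> 0" using assms by (simp add: b_def)
  define v where "v = 1/b"
  define u where "u = -1 - a/b"
  define k where "k = (1 - u - v*x)/((x-a)^2+b^2)"
  define P where "P = [:u, v:] + smult k [: a^2+b^2, -2*a, 1:]"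
  have pos: "(x-a)^2+b^2 > 0" using b by (simp add: add_nonneg_pos)
  have "poly P x = u + v*x + k*((x-a)^2+b^2)"
    by (simp add: P_def power2_eq_square algebra_simps)
  also have "k*((x-a)^2+b^2) = 1 - u - v*x" using pos b by (simp add: k_def)
  finally have "poly P x = 1" by simp
  moreover have "poly (map_poly of_real P) z = Complex (-1) 1"
    using b by (simp add: P_def z map_poly_pCons complex_eq_iff power2_eq_square u_def v_def field_simps)
  ultimately show ?thesis by blast
qed

lemma notmc: "p \<in> S \<Longrightarrow> q \<in> S \<Longrightarrow> p*q \<notin> S \<Longrightarrow> \<not> mult_closed S"
  unfolding mult_closed_def by blast

lemma part1a:
  assumes "\<beta> \<noteq> \<alpha>" "\<gamma> \<noteq> \<alpha>" "\<beta> \<noteq> \<gamma>"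
  shows "\<not> mult_closed (S_real \<beta> \<gamma> \<inter> pos_at \<alpha>)"
proof -
  obtain P where P: "poly P \<alpha> = 1" "poly P \<beta> = 1" "poly P \<gamma> = -1"
    using interp3[of \<alpha> \<beta> \<gamma> 1 1 "-1"] assms by auto
  obtain Q where Q: "poly Q \<alpha> = 1" "poly Q \<beta> = -1" "poly Q \<gamma> = -2"
    using interp3[of \<alpha> \<beta> \<gamma> 1 "-1" "-2"] assms by auto
  obtain p where p: "\<bar>reval p \<alpha> - poly P \<alpha>\<bar> < 1/2" "\<bar>reval p \<beta> - poly P \<beta>\<bar> < 1/2" "\<bar>reval p \<gamma> - poly P \<gamma>\<bar> < 1/2"
    using approx_real[where e="1/2" and P=P and a=\<alpha> and b=\<beta> and c=\<gamma>] by auto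
  obtain q where q: "\<bar>reval q \<alpha> - poly Q \<alpha>\<bar> < 1/2" "\<bar>reval q \<beta> - poly Q \<beta>\<bar> < 1/2" "\<bar>reval q \<gamma> - poly Q \<gamma>\<bar> < 1/2"
    using approx_real[where e="1/2" and P=Q and a=\<alpha> and b=\<beta> and c=\<gamma>] by auto
  have pa: "reval p \<alpha> > 0" "reval p \<beta> > 0" "reval p \<gamma> < 0" using p P unfolding abs_less_iff by auto
  have qa: "reval q \<alpha> > 0" "reval q \<beta> < 0" "reval q \<gamma> < 0" "reval q \<beta> > reval q \<gamma>" using q Q unfolding abs_less_iff by auto
  have "reval (p*q) \<beta> < 0" using pa qa by (simp add: reval_mult mult_pos_neg)
  moreover have "reval (p*q) \<gamma> > 0" using pa qa by (simp add: reval_mult mult_neg_neg)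
  ultimately have "p*q \<notin> S_real \<beta> \<gamma>" by (simp add: S_real_def)
  moreover have "p \<in> S_real \<beta> \<gamma> \<inter> pos_at \<alpha>" using pa by (simp add: S_real_def pos_at_def)
  moreover have "q \<in> S_real \<beta> \<gamma> \<inter> pos_at \<alpha>" using qa by (simp add: S_real_def pos_at_def)
  ultimately show ?thesis by (intro notmc[of p _ q]) auto
qed

lemma part1b:
  assumes "\<beta> \<noteq> \<alpha>"
  shows "\<not> mult_closed (S_real \<alpha> \<beta> \<inter> pos_at \<alpha>)"
proof -
  obtain P where P: "poly P \<alpha> = 1" "poly P \<beta> = -2"
    using interp2[of \<alpha> \<beta> 1 "-2"] assms by auto
  obtain p where p: "\<bar>reval p \<alpha> - poly P \<alpha>\<bar> < 1/2" "\<bar>reval p \<beta> - poly P \<beta>\<bar> < 1/2"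
    using approx_real[where e="1/2" and P=P and a=\<alpha> and b=\<beta> and c=\<beta>] by auto
  have pa: "reval p \<alpha> > 0" "reval p \<alpha> < 3/2" "reval p \<beta> < -3/2" using p P unfolding abs_less_iff by auto
  have "reval p \<alpha> * reval p \<alpha> < 3/2 * (3/2)" using pa by (intro mult_strict_mono) auto
  moreover have "3/2 * (3/2) < reval p \<beta> * reval p \<beta>"
    using mult_strict_mono[of "3/2" "- reval p \<beta>" "3/2" "- reval p \<beta>"] pa by auto
  ultimately have "p*p \<notin> S_real \<alpha> \<beta>" by (simp add: S_real_def reval_mult)
  moreover have "p \<in> S_real \<alpha> \<beta> \<inter> pos_at \<alpha>" using pa by (simp add: S_real_def pos_at_def)
  ultimately show ?thesis by (intro notmc[of p _ p]) auto
qed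

lemma part2:
  assumes "z \<notin> \<real>"
  shows "\<not> mult_closed (S_cplx z \<inter> pos_at \<alpha>)"
proof -
  have "Im z \<noteq> 0" using assms complex_is_Real_iff by auto
  then obtain P where P: "poly P \<alpha> = 1" "poly (map_poly of_real P) z = Complex (-1) 1"
    using interpC by blast
  obtain p where p: "\<And>w::complex. norm w \<le> norm z + \<bar>\<alpha>\<bar> \<Longrightarrow>
     norm (ceval p w - poly (map_poly of_real P) w) < 1/2"
    using approx[where e="1/2" and R="norm z + \<bar>\<alpha>\<bar>" and P=P] by auto
  have "norm (ceval p (of_real \<alpha>) - poly (map_poly of_real P) (of_real \<alpha>)) < 1/2"
    using p[of "of_real \<alpha>"] by simp
  also have "ceval p (of_real \<alpha>) - poly (map_poly of_real P) (of_real \<alpha>) = of_real (reval p \<alpha> - 1)"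
    using P by (simp add: ceval_real poly_map_of_real)
  finally have "norm (of_real (reval p \<alpha> - 1) :: complex) < 1/2" .
  then have pa: "reval p \<alpha> > 0" unfolding norm_of_real abs_less_iff by auto
  have d: "norm (ceval p z - Complex (-1) 1) < 1/2" using p[of z] P by simp
  have "\<bar>Re (ceval p z - Complex (-1) 1)\<bar> < 1/2" "\<bar>Im (ceval p z - Complex (-1) 1)\<bar> < 1/2"
    using d abs_Re_le_cmod abs_Im_le_cmod by (metis le_less_trans)+
  then have r: "Re (ceval p z) < 0" "Im (ceval p z) > 0" unfolding abs_less_iff by auto
  have "Im (ceval (p*p) z) = 2 * Re (ceval p z) * Im (ceval p z)" by (simp add: ceval_mult)
  also have "\<dots> < 0" using r by (simp add: mult_neg_pos)
  finally have "p*p \<notin> S_cplx z" by (simp add: S_cplx_def)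
  moreover have "p \<in> S_cplx z \<inter> pos_at \<alpha>" using pa r by (simp add: S_cplx_def pos_at_def)
  ultimately show ?thesis by (intro notmc[of p _ p]) auto
qed

lemma mp_add: "map_poly (of_rat :: rat \<Rightarrow> 'a::field_char_0) (p + q) = map_poly of_rat p + map_poly of_rat q"
  by (intro poly_eqI) (simp add: coeff_map_poly of_rat_add)

lemma reval_add: "reval (p+q) x = reval p x + reval q x"
  by (simp add: reval_def mp_add)

lemma reval_pCons [simp]: "reval (pCons a p) x = of_rat a + x * reval p x"
  by (simp add: reval_def map_poly_pCons)

lemma reval_0 [simp]: "reval 0 x = 0"
  by (simp add: reval_def)

lemma key3:
  assumes "reval p \<alpha> > 0" "reval p \<delta> < 0"
  shows "reval (pderiv p) \<delta> > 0 \<Longrightarrow> \<not> mult_closed (S_plus \<delta> \<inter> pos_at \<alpha>)"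
    and "reval (pderiv p) \<delta> < 0 \<Longrightarrow> \<not> mult_closed (S_minus \<delta> \<inter> pos_at \<alpha>)"
proof -
  have e: "reval (pderiv (p*p)) \<delta> = 2 * reval p \<delta> * reval (pderiv p) \<delta>"
  proof -
    have "reval (pderiv (p*p)) \<delta> = reval (p * pderiv p + p * pderiv p) \<delta>" by (simp only: pderiv_mult)
    also have "\<dots> = reval p \<delta> * reval (pderiv p) \<delta> + reval p \<delta> * reval (pderiv p) \<delta>"
      by (simp only: reval_add reval_mult)
    finally show ?thesis by simp
  qed
  show "reval (pderiv p) \<delta> > 0 \<Longrightarrow> \<not> mult_closed (S_plus \<delta> \<inter> pos_at \<alpha>)"
  proof -
    assume d: "reval (pderiv p) \<delta> > 0"
    have "reval (pderiv (p*p)) \<delta> < 0" unfolding e using assms d by (simp add: mult_neg_pos)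
    then show ?thesis using assms d by (intro notmc[of p _ p]) (auto simp: S_plus_def pos_at_def)
  qed
  show "reval (pderiv p) \<delta> < 0 \<Longrightarrow> \<not> mult_closed (S_minus \<delta> \<inter> pos_at \<alpha>)"
  proof -
    assume d: "reval (pderiv p) \<delta> < 0"
    have "reval (pderiv (p*p)) \<delta> > 0" unfolding e using assms d by (simp add: mult_neg_neg)
    then show ?thesis using assms d by (intro notmc[of p _ p]) (auto simp: S_minus_def pos_at_def)
  qed
qed

lemma quad_vals:
  "reval ([:-r,1:]*[:-t,1:]) x = (x - of_rat r) * (x - of_rat t)"
  "reval (pderiv ([:-r,1:]*[:-t,1:])) x = 2*x - of_rat r - of_rat t"
  by (simp_all add: reval_mult pderiv_mult pderiv_pCons reval_add of_rat_minus of_rat_mult of_rat_add of_rat_diff algebra_simps)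

lemma part3:
  assumes "\<delta> \<noteq> \<alpha>"
  shows "\<not> mult_closed (S_plus \<delta> \<inter> pos_at \<alpha>) \<and> \<not> mult_closed (S_minus \<delta> \<inter> pos_at \<alpha>)"
proof (cases "\<delta> < \<alpha>")
  case True
  obtain r :: rat where r: "\<delta> < of_rat r" "of_rat r < \<alpha>" using of_rat_dense[OF True] by auto
  have 1: "\<not> mult_closed (S_plus \<delta> \<inter> pos_at \<alpha>)"
    by (rule key3(1)[of "[:-r,1:]"]) (use r in \<open>simp_all add: of_rat_minus pderiv_pCons\<close>)
  obtain t :: rat where t: "\<delta> < of_rat t" "of_rat t < \<alpha>" using of_rat_dense[OF True] by auto
  obtain r :: rat where r: "2*\<delta> - of_rat t < of_rat r" "of_rat r < \<delta>" using of_rat_dense[of "2*\<delta> - of_rat t" \<delta>] t by auto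
  have 2: "\<not> mult_closed (S_minus \<delta> \<inter> pos_at \<alpha>)"
  proof (rule key3(2)[of "[:-r,1:]*[:-t,1:]"], unfold quad_vals)
    show "0 < (\<alpha> - of_rat r) * (\<alpha> - of_rat t)" using r t by (intro mult_pos_pos) auto
    show "(\<delta> - of_rat r) * (\<delta> - of_rat t) < 0" using r t by (intro mult_pos_neg) auto
  qed (use r t in auto)
  show ?thesis using 1 2 by blast
next
  case False
  then have F: "\<alpha> < \<delta>" using assms by auto
  obtain r :: rat where r: "\<alpha> < of_rat r" "of_rat r < \<delta>" using of_rat_dense[OF F] by auto
  have 2: "\<not> mult_closed (S_minus \<delta> \<inter> pos_at \<alpha>)"
    by (rule key3(2)[of "[:r,-1:]"]) (use r in \<open>simp_all add: of_rat_minus pderiv_pCons\<close>)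
  obtain r :: rat where r: "\<alpha> < of_rat r" "of_rat r < \<delta>" using of_rat_dense[OF F] by auto
  obtain t :: rat where t: "\<delta> < of_rat t" "of_rat t < 2*\<delta> - of_rat r" using of_rat_dense[of \<delta> "2*\<delta> - of_rat r"] r by auto
  have 1: "\<not> mult_closed (S_plus \<delta> \<inter> pos_at \<alpha>)"
  proof (rule key3(1)[of "[:-r,1:]*[:-t,1:]"], unfold quad_vals)
    show "0 < (\<alpha> - of_rat r) * (\<alpha> - of_rat t)" using r t by (intro mult_neg_neg) auto
    show "(\<delta> - of_rat r) * (\<delta> - of_rat t) < 0" using r t by (intro mult_pos_neg) auto
  qed (use r t in auto)
  show ?thesis using 1 2 by blast
qed

theorem lemma4p14:
  fixes \<alpha> :: real
  shows "(\<forall>\<beta> \<gamma>. \<beta> \<noteq> \<alpha> \<and> \<gamma> \<noteq> \<alpha> \<and> \<beta> \<noteq> \<gamma> \<longrightarrow>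
            \<not> mult_closed (S_real \<beta> \<gamma> \<inter> pos_at \<alpha>))
       \<and> (\<forall>\<beta>. \<beta> \<noteq> \<alpha> \<longrightarrow> \<not> mult_closed (S_real \<alpha> \<beta> \<inter> pos_at \<alpha>))
       \<and> (\<forall>z. z \<notin> \<real> \<longrightarrow> \<not> mult_closed (S_cplx z \<inter> pos_at \<alpha>))
       \<and> (\<forall>\<delta>. \<delta> \<noteq> \<alpha> \<longrightarrow>
            \<not> mult_closed (S_plus \<delta> \<inter> pos_at \<alpha>) \<and> \<not> mult_closed (S_minus \<delta> \<inter> pos_at \<alpha>))"
  using part1a part1b part2 part3 by blast

end
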